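(* For every integer $a\geq 3$ and every integer $m\geq 2a^2-a+2$, the 2-color Rado number of the equation $L(m,a)$ equals $C(m,a)=\left\lceil \frac{m-1}{a}\left\lceil \frac{m-1}{a}\right\rceil\right\rceil$.
   Context: For integers $m\geq 3$, $a\geq 1$, $L(m,a)$ denotes the equation $x_1+x_2+\cdots+x_{m-1}=a x_m$. For a positive integer $n$, $[n]=\{1,\dots,n\}$. A solution of $L(m,a)$ in $[n]$ is an $m$-tuple $(x_1,\dots,x_m)\in[n]^m$ (entries not necessarily distinct) satisfying the equation; given a 2-coloring of $[n]$, it is monochromatic if all $x_i$ have the same color. The 2-color Rado number of $L(m,a)$ is the least positive integer $n$ such that every 2-coloring of $[n]$ admits a monochromatic solution of $L(m,a)$ in $[n]$. $C(m,a)$ denotes $\left\lceil \frac{m-1}{a}\left\lceil \frac{m-1}{a}\right\rceil\right\rceil$. *)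

theory Defs
  imports Complex_Main
begin

text \<open>A solution of L(m,a): x_1 + ... + x_{m-1} = a x_m, with entries in [n] = {1..n}.
  Tuples are represented as functions x on indices 1..m.\<close>
definition is_solution_in :: "nat \<Rightarrow> nat \<Rightarrow> nat \<Rightarrow> (nat \<Rightarrow> nat) \<Rightarrow> bool" where
  "is_solution_in m a n x \<longleftrightarrow>
     (\<forall>i\<in>{1..m}. x i \<in> {1..n}) \<and> (\<Sum>i=1..m-1. x i) = a * x m"

definition rado_property :: "nat \<Rightarrow> nat \<Rightarrow> nat \<Rightarrow> bool" where
  "rado_property m a n \<longleftrightarrow>
     (\<forall>c :: nat \<Rightarrow> bool. \<exists>x. is_solution_in m a n x \<and>
        (\<forall>i\<in>{1..m}. \<forall>j\<in>{1..m}. c (x i) = c (x j)))"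

definition rado_number :: "nat \<Rightarrow> nat \<Rightarrow> nat" where
  "rado_number m a = (LEAST n. n \<ge> 1 \<and> rado_property m a n)"

definition C :: "nat \<Rightarrow> nat \<Rightarrow> int" where
  "C m a = \<lceil>(real (m - 1) / real a) * real_of_int \<lceil>real (m - 1) / real a\<rceil>\<rceil>"

end

theory Submission
  imports Defs
begin

definition rep :: "(nat \<Rightarrow> bool) \<Rightarrow> nat \<Rightarrow> nat \<Rightarrow> bool" where
  "rep P N s \<longleftrightarrow> (\<exists>xs. length xs = N \<and> (\<forall>v\<in>set xs. P v) \<and> sum_list xs = s)"

lemma rep_const: "P v \<Longrightarrow> rep P N (N * v)"
  unfolding rep_def by (rule exI[of _ "replicate N v"]) (simp add: sum_list_replicate)

lemma rep_add: "rep P N1 s1 \<Longrightarrow> rep P N2 s2 \<Longrightarrow> rep P (N1 + N2) (s1 + s2)"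
  unfolding rep_def by (metis Un_iff length_append set_append sum_list_append)

lemma rep_interval:
  assumes "\<And>v. L \<le> v \<Longrightarrow> v \<le> M \<Longrightarrow> P v" "L \<le> M"
  shows "N * L \<le> s \<Longrightarrow> s \<le> N * M \<Longrightarrow> rep P N s"
proof (induction N arbitrary: s)
  case 0
  then show ?case unfolding rep_def by simp
next
  case (Suc N)
  define v where "v = min M (s - N * L)"
  have v1: "L \<le> v" "v \<le> M" using Suc.prems assms(2) by (auto simp: v_def)
  have NLM: "N*L \<le> N*M" using assms(2) by simp
  have "rep P N (s - v)" using Suc.prems NLM by (intro Suc.IH) (auto simp: v_def min_def)
  moreover have "rep P 1 v" using rep_const[of P v 1] assms(1) v1 by simp
  ultimately have "rep P (N + 1) (s - v + v)" by (rule rep_add)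
  moreover have "s - v + v = s" using Suc.prems v1 by (auto simp: v_def)
  ultimately show ?case by simp
qed

lemma sum_shift1: "(\<Sum>i=1..(N::nat). f (i - 1)) = (\<Sum>i<N. (f i :: nat))"
  by (induction N) (simp_all add: sum.cl_ivl_Suc lessThan_Suc)

lemma sol_from_rep:
  assumes "m \<ge> 2" "rep (\<lambda>v. v \<in> {1..n} \<and> c v = col) (m - 1) (a * y)" "y \<in> {1..n}" "c y = col"
  shows "\<exists>x. is_solution_in m a n x \<and> (\<forall>i\<in>{1..m}. \<forall>j\<in>{1..m}. c (x i) = c (x j))"
proof -
  obtain xs where xs: "length xs = m - 1" "\<forall>v\<in>set xs. v \<in> {1..n} \<and> c v = col" "sum_list xs = a * y"
    using assms(2) unfolding rep_def by blast
  define x where "x i = (if i = m then y else xs ! (i - 1))" for i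
  have P: "x i \<in> {1..n} \<and> c (x i) = col" if "i \<in> {1..m}" for i
  proof (cases "i = m")
    case True then show ?thesis using assms by (simp add: x_def)
  next
    case False
    then have "i - 1 < length xs" using that xs(1) by auto
    then have "xs ! (i - 1) \<in> set xs" by simp
    then show ?thesis using xs(2) False by (simp add: x_def)
  qed
  have "(\<Sum>i=1..m-1. x i) = (\<Sum>i=1..m-1. xs ! (i - 1))"
    by (rule sum.cong) (auto simp: x_def)
  also have "\<dots> = (\<Sum>i<m-1. xs ! i)" by (rule sum_shift1)
  also have "\<dots> = sum_list xs" using xs(1) by (simp add: sum_list_sum_nth atLeast0LessThan)
  finally have "(\<Sum>i=1..m-1. x i) = a * x m" using xs(3) by (simp add: x_def)
  then show ?thesis using P unfolding is_solution_in_def by (intro exI[of _ x]) auto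
qed

lemma ceil_div_nat:
  assumes "(a::nat) > 0"
  shows "\<lceil>real u / real a\<rceil> = int ((u + a - 1) div a)"
proof -
  define q where "q = (u + a - 1) div a"
  have e: "u + a - 1 = a * q + (u + a - 1) mod a" unfolding q_def by simp
  have m: "(u + a - 1) mod a < a" using assms by simp
  have h1: "u \<le> a * q" using e m by linarith
  have h2: "a * q < u + a" using e m by linarith
  show ?thesis unfolding q_def[symmetric]
  proof (rule ceiling_unique)
    have "real u \<le> real a * real q" using h1 by (metis of_nat_le_iff of_nat_mult)
    then show "real u / real a \<le> real_of_int (int q)" using assms by (simp add: divide_le_eq mult.commute)
    have "real a * real q < real u + real a" using h2 by (metis of_nat_add of_nat_less_iff of_nat_mult)
    then show "real_of_int (int q) - 1 < real u / real a" using assms by (simp add: less_divide_eq algebra_simps)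
  qed
qed


lemma forbid:
  fixes a k b y n :: nat and c :: "nat \<Rightarrow> bool"
  assumes noS: "\<And>col y. rep (\<lambda>v. v \<in> {1..n} \<and> c v = col) k (a*y) \<Longrightarrow> y \<in> {1..n} \<Longrightarrow> c y = col \<Longrightarrow> False"
    and b3: "3 \<le> b" and bn: "b \<le> n" and S: "\<forall>v. 1 \<le> v \<longrightarrow> v \<le> b - 1 \<longrightarrow> c v = c 1"
    and ak: "1 \<le> a" "a \<le> k" and y1: "k \<le> a * y" and y2: "y \<le> (k + 1 - a) * (b - 1)" and yn: "y \<le> n"
  shows "c y \<noteq> c 1"
proof
  assume cy: "c y = c 1"
  define P where "P i \<longleftrightarrow> (a - i) * y \<le> (k - i) * (b - 1)" for i
  have Pa: "P (a - 1)" unfolding P_def using y2 ak by (simp add: Suc_diff_le)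
  define i where "i = (LEAST i. P i)"
  have Pi: "P i" unfolding i_def using Pa by (rule LeastI)
  have ia: "i \<le> a - 1" unfolding i_def using Pa by (rule Least_le)
  have low: "k - i \<le> (a - i) * y"
  proof (cases "i = 0")
    case True then show ?thesis using y1 by simp
  next
    case False
    then have "\<not> P (i - 1)" unfolding i_def by (intro not_less_Least) auto
    then have h: "(k - (i - 1)) * (b - 1) < (a - (i - 1)) * y" unfolding P_def by simp
    have "(k - (i - 1)) * 2 \<le> (k - (i - 1)) * (b - 1)" using b3 by (intro mult_le_mono) auto
    moreover have "(a - (i - 1)) * y \<le> (2 * (a - i)) * y"
      using False ia by (intro mult_le_mono1) linarith
    ultimately have "(k - (i - 1)) * 2 < (2 * (a - i)) * y" using h by linarith
    then have "(k - (i - 1)) * 2 < 2 * ((a - i) * y)" by (simp add: mult.assoc)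
    then show ?thesis using False ia ak by linarith
  qed
  have y0: "1 \<le> y" using y1 ak by (cases y) auto
  have r1: "rep (\<lambda>v. v \<in> {1..n} \<and> c v = c 1) i (i * y)" using y0 yn cy by (intro rep_const) auto
  have r2: "rep (\<lambda>v. v \<in> {1..n} \<and> c v = c 1) (k - i) ((a - i) * y)"
  proof (rule rep_interval[of 1 "b - 1"])
    fix v assume "1 \<le> v" "v \<le> b - 1"
    then have "v \<le> n" "c v = c 1" using S bn by (linarith, blast)
    then show "v \<in> {1..n} \<and> c v = c 1" using \<open>1 \<le> v\<close> by simp
  next
    show "1 \<le> b - 1" using b3 by simp
  next
    show "(k - i) * 1 \<le> (a - i) * y" using low by simp
  next
    show "(a - i) * y \<le> (k - i) * (b - 1)" using Pi unfolding P_def .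
  qed
  have R: "rep (\<lambda>v. v \<in> {1..n} \<and> c v = c 1) (i + (k - i)) (i * y + (a - i) * y)"
    using r1 r2 by (rule rep_add)
  have e1: "i + (k - i) = k" using ia ak by simp
  have "i * y + (a - i) * y = (i + (a - i)) * y" by (rule add_mult_distrib[symmetric])
  also have "i + (a - i) = a" using ia ak by simp
  finally have e2: "i * y + (a - i) * y = a * y" .
  have "rep (\<lambda>v. v \<in> {1..n} \<and> c v = c 1) k (a * y)" using R unfolding e1 e2 .
  then show False by (rule noS) (use y0 yn cy in auto)
qed

lemma key: fixes a k t C :: nat assumes "3*a \<le> k" "2*a \<le> t" "a*C < k*t + a" "3 \<le> a"
  shows "(a-1)*C \<le> (k-1)*(t-1)"
proof -
  obtain s where s: "t = 2*a + s" using assms(2) le_Suc_ex by blast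
  obtain j where j: "k = 3*a + j" using assms(1) le_Suc_ex by blast
  obtain b where b: "a = b + 3" using assms(4) le_Suc_ex by (metis add.commute)
  have "a*((a-1)*C) \<le> a*((k-1)*(t-1))"
  proof -
    have "a*((a-1)*C) = (a-1)*(a*C)" by (simp add: algebra_simps)
    also have "\<dots> \<le> (a-1)*(k*t+a-1)" using assms(3) by (intro mult_le_mono2) simp
    also have "\<dots> \<le> a*((k-1)*(t-1))" unfolding s j b by (simp add: algebra_simps)
    finally show ?thesis .
  qed
  then show ?thesis using assms by simp
qed

theorem theorem1:
  fixes a m :: nat
  assumes "a \<ge> 3" and "m \<ge> 2 * a^2 - a + 2"
  shows "int (rado_number m a) = C m a"
proof -
  define k where "k = m - 1"
  have a3: "3 \<le> a" using assms(1) .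
  have a0: "0 < a" using a3 by simp
  obtain a' where aj: "a = a' + 3" using a3 by (metis add.commute le_Suc_ex)
  have "a \<le> a * a" using a0 by simp
  then have hk: "2 * a * a + 1 \<le> k + a" using assms(2) unfolding k_def power2_eq_square by linarith
  have mk: "m - 1 = k" using k_def by simp
  have m2: "2 \<le> m"
  proof (rule ccontr)
    assume "\<not> 2 \<le> m"
    then have "k = 0" using k_def by simp
    then show False using hk \<open>a \<le> a * a\<close> a3 by linarith
  qed
  have ka: "a * a \<le> k" using hk \<open>a \<le> a * a\<close> by linarith
  have "3 * a \<le> a * a" using a3 by simp
  then have k3a: "3 * a \<le> k" using ka by linarith
  define t where "t = (k + a - 1) div a"
  define Cn where "Cn = (k * t + a - 1) div a"
  have e1: "k + a - 1 = a * t + (k + a - 1) mod a" unfolding t_def by simp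
  have "(k + a - 1) mod a < a" using a0 by simp
  then have ht1: "k \<le> a * t" and ht2: "a * t < k + a" using e1 by linarith+
  have e2: "k * t + a - 1 = a * Cn + (k * t + a - 1) mod a" unfolding Cn_def by simp
  have "(k * t + a - 1) mod a < a" using a0 by simp
  then have hC1: "k * t \<le> a * Cn" and hC2: "a * Cn < k * t + a" using e2 by linarith+
  have Ceq: "C m a = int Cn"
  proof -
    have c1: "\<lceil>real k / real a\<rceil> = int t" unfolding t_def by (rule ceil_div_nat[OF a0])
    have "real (m - 1) / real a * real_of_int \<lceil>real (m - 1) / real a\<rceil> = real (k * t) / real a"
      unfolding mk c1 by simp
    then show ?thesis unfolding C_def Cn_def by (simp only: ceil_div_nat[OF a0])
  qed
  have t2a: "2 * a \<le> t"
  proof (rule ccontr)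
    assume "\<not> 2 * a \<le> t"
    then have "t \<le> 2 * a - 1" by simp
    then have "a * t \<le> a * (2 * a - 1)" by (rule mult_le_mono2)
    also have "\<dots> = 2 * a * a - a" by (simp add: diff_mult_distrib2)
    finally have "a * t \<le> 2 * a * a - a" .
    moreover have "a \<le> 2 * a * a" using \<open>a \<le> a * a\<close> by linarith
    ultimately show False using ht1 hk by linarith
  qed
  have Cn2k: "2 * k \<le> Cn"
  proof -
    have "k * (2 * a) \<le> k * t" using t2a by (rule mult_le_mono2)
    moreover have "a * (2 * k) = k * (2 * a)" by simp
    ultimately have "a * (2 * k) \<le> a * Cn" using hC1 by linarith
    then show ?thesis using a0 by simp
  qed
  have lower: "\<not> rado_property m a n" if "n < Cn" for n
  proof
    assume "rado_property m a n"
    then have "\<exists>x. is_solution_in m a n x \<and> (\<forall>i\<in>{1..m}. \<forall>j\<in>{1..m}. (x i < t) = (x j < t))"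
      unfolding rado_property_def by (rule allE[where x="\<lambda>v. v < t"]) simp
    then obtain x where sol: "is_solution_in m a n x"
      and mono: "\<forall>i\<in>{1..m}. \<forall>j\<in>{1..m}. (x i < t) = (x j < t)" by blast
    have xr: "\<forall>i\<in>{1..m}. x i \<in> {1..n}"
      using sol unfolding is_solution_in_def by (rule conjunct1)
    have xs: "(\<Sum>i=1..k. x i) = a * x m"
      using sol unfolding is_solution_in_def mk by (rule conjunct2)
    have mm: "m \<in> {1..m}" using m2 by simp
    have im: "i \<in> {1..m}" if "i \<in> {1..k}" for i using that k_def by auto
    have xmn: "x m \<le> n" using bspec[OF xr mm] by simp
    show False
    proof (cases "x m < t")
      case True
      have "(\<Sum>i=1..k. (1::nat)) \<le> (\<Sum>i=1..k. x i)"
      proof (rule sum_mono)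
        fix i assume "i \<in> {1..k}"
        then have "x i \<in> {1..n}" using bspec[OF xr im] by blast
        then show "1 \<le> x i" by simp
      qed
      then have "k \<le> a * x m" using xs by simp
      moreover have "a * x m \<le> a * (t - 1)" using True by (intro mult_le_mono2) linarith
      moreover have "a * (t - 1) = a * t - a" by (simp add: diff_mult_distrib2)
      moreover have "a * 1 \<le> a * t" using t2a a0 by (intro mult_le_mono2) linarith
      ultimately show False using ht2 by linarith
    next
      case False
      have "(\<Sum>i=1..k. t) \<le> (\<Sum>i=1..k. x i)"
      proof (rule sum_mono)
        fix i assume "i \<in> {1..k}"
        then have "i \<in> {1..m}" by (rule im)
        then have "(x i < t) = (x m < t)" using bspec[OF bspec[OF mono], of i m] mm by blast
        then show "t \<le> x i" using False by linarith
      qed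
      then have "k * t \<le> a * x m" using xs by simp
      moreover have "x m + 1 \<le> Cn" using xmn that by linarith
      then have "a * (x m + 1) \<le> a * Cn" by (rule mult_le_mono2)
      moreover have "a * (x m + 1) = a * x m + a" by simp
      ultimately show False using hC2 by linarith
    qed
  qed
  have upper: "rado_property m a Cn"
    unfolding rado_property_def
  proof
    fix c :: "nat \<Rightarrow> bool"
    show "\<exists>x. is_solution_in m a Cn x \<and> (\<forall>i\<in>{1..m}. \<forall>j\<in>{1..m}. c (x i) = c (x j))"
    proof (rule ccontr)
      assume NS: "\<not> ?thesis"
      have noS: "\<And>col y. rep (\<lambda>v. v \<in> {1..Cn} \<and> c v = col) k (a*y) \<Longrightarrow> y \<in> {1..Cn} \<Longrightarrow> c y = col \<Longrightarrow> False"
        using sol_from_rep[OF m2, of Cn c] NS unfolding mk by blast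
      have tk: "t \<le> k"
      proof (rule ccontr)
        assume "\<not> t \<le> k"
        then have "a * (k + 1) \<le> a * t" by (intro mult_le_mono2) simp
        moreover have "1 * k \<le> a * k" using a0 by (intro mult_le_mono1) linarith
        ultimately show False using ht2 by (simp add: algebra_simps)
      qed
      have tC: "t \<le> Cn" using tk Cn2k by linarith
      have PI: "\<And>col L M N s. (\<And>v. L \<le> v \<Longrightarrow> v \<le> M \<Longrightarrow> c v = col) \<Longrightarrow> 1 \<le> L \<Longrightarrow> L \<le> M \<Longrightarrow> M \<le> Cn
          \<Longrightarrow> N * L \<le> s \<Longrightarrow> s \<le> N * M \<Longrightarrow> rep (\<lambda>v. v \<in> {1..Cn} \<and> c v = col) N s"
        by (rule rep_interval) auto
      have PC: "\<And>col v N. c v = col \<Longrightarrow> 1 \<le> v \<Longrightarrow> v \<le> Cn \<Longrightarrow> rep (\<lambda>v. v \<in> {1..Cn} \<and> c v = col) N (N * v)"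
        by (intro rep_const) auto
      show False
      proof (cases "c 2 = c 1")
        case False
        define p where "p = k - a"
        have kp: "k = p + a" using k3a p_def by simp
        have pC: "2 * p + 2 \<le> Cn" using kp Cn2k a0 by linarith
        have c1: "c (p + 2) = c 1"
        proof (rule ccontr)
          assume "c (p + 2) \<noteq> c 1"
          then have cc: "c (p + 2) = c 2" using False by auto
          have "rep (\<lambda>v. v \<in> {1..Cn} \<and> c v = c 2) ((a - 2) + (p + 2)) ((a - 2) * (p + 2) + (p + 2) * 2)"
            by (rule rep_add; rule PC) (use cc pC Cn2k ka a3 in auto)
          moreover have "(a - 2) + (p + 2) = k" using kp a3 by simp
          moreover have "(a - 2) * (p + 2) + (p + 2) * 2 = a * (p + 2)"
            unfolding aj by (simp add: algebra_simps)
          ultimately show False using noS[of "c 2" "p + 2"] cc pC by auto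
        qed
        have c2: "c (2 * p + 2) = c 1"
        proof (rule ccontr)
          assume "c (2 * p + 2) \<noteq> c 1"
          then have cc: "c (2 * p + 2) = c 2" using False by auto
          have "rep (\<lambda>v. v \<in> {1..Cn} \<and> c v = c 2) ((a - 1) + (p + 1)) ((a - 1) * (2 * p + 2) + (p + 1) * 2)"
            by (rule rep_add; rule PC) (use cc pC Cn2k ka a3 in auto)
          moreover have "(a - 1) + (p + 1) = k" using kp a3 by simp
          moreover have "(a - 1) * (2 * p + 2) + (p + 1) * 2 = a * (2 * p + 2)"
            unfolding aj by (simp add: algebra_simps)
          ultimately show False using noS[of "c 2" "2 * p + 2"] cc pC by auto
        qed
        have "rep (\<lambda>v. v \<in> {1..Cn} \<and> c v = c 1) ((a - 1) + 1 + p) ((a - 1) * (2 * p + 2) + 1 * (p + 2) + p * 1)"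
          by (rule rep_add; (rule rep_add)?; rule PC) (use c1 c2 pC in auto)
        moreover have "(a - 1) + 1 + p = k" using kp a3 by simp
        moreover have "(a - 1) * (2 * p + 2) + 1 * (p + 2) + p * 1 = a * (2 * p + 2)"
          unfolding aj by (simp add: algebra_simps)
        ultimately show False using noS[of "c 1" "2 * p + 2"] c2 pC by auto
      next
        case True
        have t3: "3 \<le> t" using t2a a3 by linarith
        have a1k: "1 \<le> a" "a \<le> k" using a3 k3a by auto
        show False
        proof (cases "\<forall>v. 1 \<le> v \<longrightarrow> v \<le> t - 1 \<longrightarrow> c v = c 1")
          case True
          have q7: "7 \<le> k + 1 - a" using k3a a3 by linarith
          have ct: "c t \<noteq> c 1"
          proof (rule forbid[OF noS t3 tC True a1k ht1 _ tC])
            have "t \<le> (t - 1) * 2" using t3 by simp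
            also have "\<dots> \<le> (t - 1) * (k + 1 - a)" using q7 by (intro mult_le_mono2) simp
            finally show "t \<le> (k + 1 - a) * (t - 1)" by (simp add: mult.commute)
          qed
          have t1C: "t + 1 \<le> Cn" using tk Cn2k k3a a3 by linarith
          have ct1: "c (t + 1) \<noteq> c 1"
          proof (rule forbid[OF noS t3 tC True a1k _ _ t1C])
            show "k \<le> a * (t + 1)" using ht1 by simp
            have "t + 1 \<le> (t - 1) * 3" using t3 by simp
            also have "\<dots> \<le> (t - 1) * (k + 1 - a)" using q7 by (intro mult_le_mono2) simp
            finally show "t + 1 \<le> (k + 1 - a) * (t - 1)" by (simp add: mult.commute)
          qed
          have cC: "c Cn = c 1"
          proof (rule ccontr)
            assume ncC: "c Cn \<noteq> c 1"
            have "rep (\<lambda>v. v \<in> {1..Cn} \<and> c v = c t) k (a * Cn)"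
            proof (rule PI[of t "t + 1"])
              fix v assume "t \<le> v" "v \<le> t + 1"
              then have "v = t \<or> v = t + 1" by auto
              then show "c v = c t" using ct ct1 by auto
            next
              show "a * Cn \<le> k * (t + 1)" using hC2 a1k by (simp add: algebra_simps)
            qed (use t3 t1C hC1 in \<open>auto simp: mult.commute\<close>)
            then show False using noS[of "c t" Cn] ncC ct tC t3 by auto
          qed
          have "rep (\<lambda>v. v \<in> {1..Cn} \<and> c v = c 1) (1 + (k - 1)) (1 * Cn + (a - 1) * Cn)"
          proof (rule rep_add)
            show "rep (\<lambda>v. v \<in> {1..Cn} \<and> c v = c 1) 1 (1 * Cn)" using cC tC t3 by (intro PC) auto
            show "rep (\<lambda>v. v \<in> {1..Cn} \<and> c v = c 1) (k - 1) ((a - 1) * Cn)"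
            proof (rule PI[of 1 "t - 1"])
              show "(a - 1) * Cn \<le> (k - 1) * (t - 1)" using key[OF k3a t2a hC2 a3] .
              have h1: "(k - 1) \<le> Cn" using Cn2k by linarith
              have h2: "1 * Cn \<le> (a - 1) * Cn" using a3 by (intro mult_le_mono1) linarith
              show "(k - 1) * 1 \<le> (a - 1) * Cn" using h1 h2 by linarith
          next
            fix v assume "1 \<le> v" "v \<le> t - 1"
            then show "c v = c 1" using True by blast
          next
            show "1 \<le> (1::nat)" by simp
          next
            show "1 \<le> t - 1" using t3 by simp
          next
            show "t - 1 \<le> Cn" using tC by simp
          qed
          qed
          moreover have "1 + (k - 1) = k" using a1k by simp
          moreover have "1 * Cn + (a - 1) * Cn = a * Cn" unfolding aj by (simp add: algebra_simps)
          ultimately show False using noS[of "c 1" Cn] cC tC t3 by auto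
        next
          case False
          define Q where "Q v \<longleftrightarrow> 1 \<le> v \<and> v \<le> t - 1 \<and> c v \<noteq> c 1" for v
          from False obtain v where "Q v" unfolding Q_def by auto
          define b where "b = (LEAST v. Q v)"
          have Qb: "Q b" unfolding b_def using \<open>Q v\<close> by (rule LeastI)
          have bmin: "\<forall>w. 1 \<le> w \<longrightarrow> w \<le> b - 1 \<longrightarrow> c w = c 1"
          proof (intro allI impI)
            fix w assume w: "1 \<le> w" "w \<le> b - 1"
            then have "w < b" by linarith
            then have "\<not> Q w" unfolding b_def by (rule not_less_Least)
            then show "c w = c 1" using w Qb unfolding Q_def by auto
          qed
          have cb: "c b \<noteq> c 1" and bt: "b \<le> t - 1" using Qb unfolding Q_def by auto
          have b3: "3 \<le> b"
          proof (rule ccontr)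
            assume "\<not> 3 \<le> b"
            then have "b = 1 \<or> b = 2" using Qb unfolding Q_def by auto
            then show False using cb \<open>c 2 = c 1\<close> by auto
          qed
          have bC: "b \<le> Cn" using bt tC by linarith
          define x0 where "x0 = ((k - 1) * b + t + a - 1) div a"
          have e3: "(k - 1) * b + t + a - 1 = a * x0 + ((k - 1) * b + t + a - 1) mod a" unfolding x0_def by simp
          have "((k - 1) * b + t + a - 1) mod a < a" using a0 by simp
          then have hx1: "(k - 1) * b + t \<le> a * x0" and hx2: "a * x0 < (k - 1) * b + t + a" using e3 by linarith+
          define z where "z = a * x0 - (k - 1) * b"
          have hz: "t \<le> z" "z < t + a" "a * x0 = (k - 1) * b + z" using hx1 hx2 unfolding z_def by auto
          have q2: "t + a \<le> (k + 1 - a) * 2" using tk k3a by linarith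
          also have "\<dots> \<le> (k + 1 - a) * (b - 1)" using b3 by (intro mult_le_mono2) simp
          finally have q3: "t + a \<le> (k + 1 - a) * (b - 1)" .
          have zC: "z \<le> Cn" using hz tk a1k Cn2k by linarith
          have cz: "c z \<noteq> c 1"
          proof (rule forbid[OF noS b3 bC bmin a1k _ _ zC])
            have "a * t \<le> a * z" using hz by (intro mult_le_mono2) simp
            then show "k \<le> a * z" using ht1 by linarith
            show "z \<le> (k + 1 - a) * (b - 1)" using hz q3 by linarith
          qed
          have kb1: "(k - 1) * b \<le> (k - 1) * (t - 1)" using bt by (rule mult_le_mono2)
          have kt1: "(k - 1) * (t - 1) + k + t = k * t + 1"
          proof -
            obtain k' where k': "k = k' + 1" using a1k by (metis add.commute le_Suc_ex le_trans)
            obtain t' where t': "t = t' + 1" using t3 by (metis add.commute le_Suc_ex le_trans one_le_numeral)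
            show ?thesis unfolding k' t' by (simp add: algebra_simps)
          qed
          have "a * x0 \<le> k * t" using hx2 kb1 kt1 a1k by linarith
          then have "a * x0 \<le> a * Cn" using hC1 by linarith
          then have x0C: "x0 \<le> Cn" using a0 by simp
          have cx: "c x0 \<noteq> c 1"
          proof (rule forbid[OF noS b3 bC bmin a1k _ _ x0C])
            have "(k - 1) * 3 \<le> (k - 1) * b" using b3 by (rule mult_le_mono2)
            then show "k \<le> a * x0" using hx1 k3a a3 by linarith
            have k2: "2 * k \<le> a * (k + 1 - a)"
            proof -
              obtain j where j: "a = j + 3" using a3 by (metis add.commute le_Suc_ex)
              obtain l where l: "k = a * a + l" using ka le_Suc_ex by blast
              show ?thesis unfolding l j by (simp add: algebra_simps)
            qed
            have "2 * k * (b - 1) \<le> a * (k + 1 - a) * (b - 1)" using k2 by (rule mult_le_mono1)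
            moreover have "(k - 1) * b + t + a \<le> 2 * k * (b - 1)"
            proof -
              obtain d where d: "b = d + 3" using b3 by (metis add.commute le_Suc_ex)
              have "3 * t \<le> a * t" using a3 by (rule mult_le_mono1)
              then have "t + a + 1 \<le> k" using k3a ht2 a3 by linarith
              then show ?thesis unfolding d by (simp add: algebra_simps)
            qed
            moreover have "a * (k + 1 - a) * (b - 1) = a * ((k + 1 - a) * (b - 1))" by (rule mult.assoc)
            ultimately have "a * x0 \<le> a * ((k + 1 - a) * (b - 1))" using hx2 by linarith
            then show "x0 \<le> (k + 1 - a) * (b - 1)" using a0 by simp
          qed
          have R: "rep (\<lambda>v. v \<in> {1..Cn} \<and> c v = c b) ((k - 1) + 1) ((k - 1) * b + 1 * z)"
            by (rule rep_add; rule PC) (use cb cz b3 bC hz t3 zC in auto)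
          have e1: "(k - 1) + 1 = k" using a1k by simp
          have e2: "(k - 1) * b + 1 * z = a * x0" using hz by simp
          have x01: "1 \<le> x0" using hz t3 by (cases x0) auto
          have cxb: "c x0 = c b" using cx cb by auto
          have "rep (\<lambda>v. v \<in> {1..Cn} \<and> c v = c b) k (a * x0)" using R unfolding e1 e2 .
          then show False by (rule noS) (use x01 x0C cxb in auto)
        qed
      qed
    qed
  qed
  have "rado_number m a = Cn"
    unfolding rado_number_def
  proof (rule Least_equality)
    have "1 \<le> Cn" using Cn2k k3a a3 by linarith
    then show "1 \<le> Cn \<and> rado_property m a Cn" using upper by simp
  next
    fix n assume "1 \<le> n \<and> rado_property m a n"
    then show "Cn \<le> n" using lower by (meson not_le)
  qed
  then show ?thesis using Ceq by simp
qed

end
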